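(* Let $\mu_\alpha,\mu_\beta$ satisfy Assumption B (see context). Let $\mathcal{E}$ be a compact interval with $\mathrm{supp}(\mu_\alpha\boxplus\mu_\beta)\subset\mathcal{E}$ and $\mathcal{J}:=\{E+i\eta:\ E\in\mathcal{E},\ 0\le\eta\le1\}$. Then there exist constants $C_\alpha,C_\beta>0$ such that $$\inf_{z\in\mathcal{J}}\mathrm{dist}\big(\omega_\alpha(z),\mathrm{supp}(\mu_\beta)\big)\ge C_\alpha,\qquad\inf_{z\in\mathcal{J}}\mathrm{dist}\big(\omega_\beta(z),\mathrm{supp}(\mu_\alpha)\big)\ge C_\beta.$$
   Context: Assumption B: $\mu_\alpha,\mu_\beta$ are absolutely continuous, centered Borel probability measures on $\mathbb{R}$; $\mu_\alpha$ is supported on $n_\alpha\ge1$ disjoint intervals $[A_j^-,A_j^+]$ and $\mu_\beta$ on $n_\beta\ge1$ disjoint intervals $[B_j^-,B_j^+]$; their densities satisfy power laws at the endpoints of each interval with exponents in $(-1,1)$ (e.g. $C^{-1}<\rho_\alpha(x)/\big((x-A_j^-)^{s_j^-}(A_j^+-x)^{s_j^+}\big)<C$ a.e. on $[A_j^-,A_j^+]$, $-1<s_j^\pm<1$; analogously for $\rho_\beta$). $m_\nu(z)=\int\frac{1}{x-z}\nu(dx)$, $F_\nu=-1/m_\nu$. Subordination functions: analytic $\omega_\alpha,\omega_\beta:\mathbb{C}^+\to\mathbb{C}^+$ with $\mathrm{Im}\,\omega_{\alpha},\mathrm{Im}\,\omega_\beta\ge\mathrm{Im}\,z$, $\omega_{\alpha}(i\eta)/(i\eta),\omega_\beta(i\eta)/(i\eta)\to1$,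 and $\omega_\alpha+\omega_\beta-z=F_{\mu_\alpha}\circ\omega_\beta=F_{\mu_\beta}\circ\omega_\alpha$; they extend continuously to $\mathbb{C}^+\cup\mathbb{R}$ with values in $\mathbb{C}^+\cup\mathbb{R}\cup\{\infty\}$. $\mu_\alpha\boxplus\mu_\beta$ has $F_{\mu_\alpha\boxplus\mu_\beta}=F_{\mu_\alpha}\circ\omega_\beta$. *)

theory Defs
  imports "HOL-Probability.Probability"
begin

definition stieltjes :: "real measure \<Rightarrow> complex \<Rightarrow> complex" where
  "stieltjes \<nu> z = (LINT x|\<nu>. 1 / (complex_of_real x - z))"

definition Ftrans :: "real measure \<Rightarrow> complex \<Rightarrow> complex" where
  "Ftrans \<nu> z = - 1 / stieltjes \<nu> z"

definition msupp :: "real measure \<Rightarrow> real set" where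
  "msupp \<nu> = {x. \<forall>e>0. emeasure \<nu> (ball x e) > 0}"

definition assumptionB :: "real measure \<Rightarrow> nat \<Rightarrow> (nat \<Rightarrow> real) \<Rightarrow> (nat \<Rightarrow> real) \<Rightarrow> bool" where
  "assumptionB \<mu> n lo hi \<longleftrightarrow>
     n \<ge> 1 \<and>
     (\<forall>j<n. lo j < hi j) \<and>
     (\<forall>i<n. \<forall>j<n. i \<noteq> j \<longrightarrow> hi i < lo j \<or> hi j < lo i) \<and>
     prob_space \<mu> \<and>
     integral\<^sup>L \<mu> (\<lambda>x. x) = 0 \<and>
     (\<exists>\<rho> C slo shi.
        \<rho> \<in> borel_measurable borel \<and> (\<forall>x. \<rho> x \<ge> 0) \<and>
        \<mu> = density lborel (\<lambda>x. ennreal (\<rho> x)) \<and>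
        (AE x in lborel. (\<forall>j<n. x \<notin> {lo j..hi j}) \<longrightarrow> \<rho> x = 0) \<and>
        C > 0 \<and>
        (\<forall>j<n. -1 < slo j \<and> slo j < 1 \<and> -1 < shi j \<and> shi j < 1) \<and>
        (\<forall>j<n. AE x in lborel. x \<in> {lo j..hi j} \<longrightarrow>
            inverse C < \<rho> x / ((x - lo j) powr slo j * (hi j - x) powr shi j) \<and>
            \<rho> x / ((x - lo j) powr slo j * (hi j - x) powr shi j) < C))"

definition subordination ::
  "real measure \<Rightarrow> real measure \<Rightarrow> (complex \<Rightarrow> complex) \<Rightarrow> (complex \<Rightarrow> complex) \<Rightarrow> bool" where
  "subordination \<mu>a \<mu>b \<omega>a \<omega>b \<longleftrightarrow>
     \<omega>a holomorphic_on {z. Im z > 0} \<and> \<omega>b holomorphic_on {z. Im z > 0} \<and>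
     (\<forall>z. Im z > 0 \<longrightarrow> Im (\<omega>a z) \<ge> Im z \<and> Im (\<omega>b z) \<ge> Im z) \<and>
     ((\<lambda>\<eta>. \<omega>a (\<i> * complex_of_real \<eta>) / (\<i> * complex_of_real \<eta>)) \<longlongrightarrow> 1) at_top \<and>
     ((\<lambda>\<eta>. \<omega>b (\<i> * complex_of_real \<eta>) / (\<i> * complex_of_real \<eta>)) \<longlongrightarrow> 1) at_top \<and>
     (\<forall>z. Im z > 0 \<longrightarrow>
        \<omega>a z + \<omega>b z - z = Ftrans \<mu>a (\<omega>b z) \<and>
        \<omega>a z + \<omega>b z - z = Ftrans \<mu>b (\<omega>a z))"

end

theory Submission
  imports Defs
begin


definition Ist :: "real measure \<Rightarrow> complex \<Rightarrow> real" where
  "Ist M w = (\<integral>y. 1 / (cmod (complex_of_real y - w))^2 \<partial>M)"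

lemma cmod_ge_Im: "Im w \<le> cmod (complex_of_real y - w)"
proof -
  have "\<bar>Im (complex_of_real y - w)\<bar> \<le> cmod (complex_of_real y - w)" by (rule abs_Im_le_cmod)
  then show ?thesis by simp
qed

lemma ident:
  fixes M :: "real measure" and w :: complex
  assumes P: "prob_space M" and S: "sets M = sets borel" and W: "Im w > 0"
  shows "integrable M (\<lambda>y. 1 / (complex_of_real y - w))"
    and "integrable M (\<lambda>y. 1 / (cmod (complex_of_real y - w))^2)"
    and "0 < Ist M w"
    and "Im (stieltjes M w) = Im w * Ist M w"
    and "stieltjes M w \<noteq> 0"
    and "(\<integral>y. (cmod (1 + Ftrans M w / (complex_of_real y - w)))^2 \<partial>M) = (cmod (Ftrans M w))^2 * Ist M w - 1"
    and "Im (Ftrans M w) = Im w * (cmod (Ftrans M w))^2 * Ist M w"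
proof -
  interpret prob_space M by (rule P)
  have e: "borel_measurable M = borel_measurable borel" by (rule measurable_cong_sets[OF S refl])
  have mg: "(\<lambda>y. 1 / (complex_of_real y - w)) \<in> borel_measurable M"
    unfolding e by measurable
  have mh: "(\<lambda>y. 1 / (cmod (complex_of_real y - w))^2) \<in> borel_measurable M"
    unfolding e by measurable
  have pos: "0 < cmod (complex_of_real y - w)" for y
    using cmod_ge_Im[of w y] W by linarith
  show ig: "integrable M (\<lambda>y. 1 / (complex_of_real y - w))"
  proof (rule integrable_const_bound[where B="1 / Im w"])
    show "AE x in M. norm (1 / (complex_of_real x - w)) \<le> 1 / Im w"
    proof (rule AE_I2)
      fix x
      show "norm (1 / (complex_of_real x - w)) \<le> 1 / Im w"
        using cmod_ge_Im[of w x] W by (simp add: norm_divide frac_le)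
    qed
  qed (rule mg)
  show ih: "integrable M (\<lambda>y. 1 / (cmod (complex_of_real y - w))^2)"
  proof (rule integrable_const_bound[where B="1 / (Im w)^2"])
    show "AE x in M. norm (1 / (cmod (complex_of_real x - w))^2) \<le> 1 / (Im w)^2"
    proof (rule AE_I2)
      fix x
      have "(Im w)^2 \<le> (cmod (complex_of_real x - w))^2"
        using cmod_ge_Im[of w x] W by (simp add: power_mono)
      then show "norm (1 / (cmod (complex_of_real x - w))^2) \<le> 1 / (Im w)^2"
        using W by (simp add: frac_le)
    qed
  qed (rule mh)
  show Ipos: "0 < Ist M w"
  proof -
    have nn: "AE x in M. 0 \<le> 1 / (cmod (complex_of_real x - w))^2" by simp
    have "Ist M w \<ge> 0" unfolding Ist_def by (rule integral_nonneg_AE[OF nn])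
    moreover have "Ist M w \<noteq> 0"
    proof
      assume "Ist M w = 0"
      then have "AE x in M. 1 / (cmod (complex_of_real x - w))^2 = 0"
        using integral_nonneg_eq_0_iff_AE[OF ih nn] unfolding Ist_def by simp
      then have "AE x in M. False" using pos eventually_mono by fastforce
      then show False using AE_False by auto
    qed
    ultimately show ?thesis by linarith
  qed
  have imf: "Im (1 / (complex_of_real y - w)) = Im w * (1 / (cmod (complex_of_real y - w))^2)" for y
    by (simp add: Im_divide cmod_power2)
  show imm: "Im (stieltjes M w) = Im w * Ist M w"
  proof -
    have "Im (stieltjes M w) = (\<integral>y. Im (1 / (complex_of_real y - w)) \<partial>M)"
      unfolding stieltjes_def by (rule integral_Im[OF ig, symmetric])
    also have "\<dots> = (\<integral>y. Im w * (1 / (cmod (complex_of_real y - w))^2) \<partial>M)"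
      by (simp only: imf)
    also have "\<dots> = Im w * Ist M w" unfolding Ist_def by (rule integral_mult_right_zero)
    finally show ?thesis .
  qed
  show mnz: "stieltjes M w \<noteq> 0"
  proof
    assume "stieltjes M w = 0"
    then have "Im w * Ist M w = 0" using imm by simp
    then show False using W Ipos by simp
  qed
  define F where "F = Ftrans M w"
  have Fm: "F * stieltjes M w = -1" unfolding F_def Ftrans_def using mnz by simp
  have pw: "(cmod (1 + F / (complex_of_real y - w)))^2 =
      1 + 2 * Re (F * (1 / (complex_of_real y - w))) + (cmod F)^2 * (1 / (cmod (complex_of_real y - w))^2)" for y
  proof -
    define a where "a = F * (1 / (complex_of_real y - w))"
    have "F / (complex_of_real y - w) = a" unfolding a_def by simp
    moreover have "(cmod (1 + a))^2 = 1 + 2 * Re a + (cmod a)^2"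
      unfolding cmod_power2 by (simp add: power2_eq_square algebra_simps)
    moreover have "(cmod a)^2 = (cmod F)^2 * (1 / (cmod (complex_of_real y - w))^2)"
      unfolding a_def by (simp add: norm_mult norm_divide power_divide)
    ultimately show ?thesis by simp
  qed
  have i0: "integrable M (\<lambda>y. F * (1 / (complex_of_real y - w)))"
    using ig by (rule integrable_mult_right)
  have i1: "integrable M (\<lambda>y. 2 * Re (F * (1 / (complex_of_real y - w))))"
    using integrable_Re[OF i0] by (rule integrable_mult_right)
  have i2: "integrable M (\<lambda>y. (cmod F)^2 * (1 / (cmod (complex_of_real y - w))^2))"
    using ih by (rule integrable_mult_right)
  have i3: "integrable M (\<lambda>y. 1 + 2 * Re (F * (1 / (complex_of_real y - w))))"
    by (rule Bochner_Integration.integrable_add[OF _ i1]) simp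
  have "(\<integral>y. (cmod (1 + F / (complex_of_real y - w)))^2 \<partial>M)
      = (\<integral>y. 1 + 2 * Re (F * (1 / (complex_of_real y - w))) + (cmod F)^2 * (1 / (cmod (complex_of_real y - w))^2) \<partial>M)"
    using pw by simp
  also have "\<dots> = 1 + 2 * Re (F * stieltjes M w) + (cmod F)^2 * Ist M w"
  proof -
    have "(\<integral>y. 1 + 2 * Re (F * (1 / (complex_of_real y - w))) + (cmod F)^2 * (1 / (cmod (complex_of_real y - w))^2) \<partial>M)
      = (\<integral>y. 1 + 2 * Re (F * (1 / (complex_of_real y - w))) \<partial>M) + (\<integral>y. (cmod F)^2 * (1 / (cmod (complex_of_real y - w))^2) \<partial>M)"
      by (rule Bochner_Integration.integral_add[OF i3 i2])
    also have "(\<integral>y. 1 + 2 * Re (F * (1 / (complex_of_real y - w))) \<partial>M) = 1 + (\<integral>y. 2 * Re (F * (1 / (complex_of_real y - w))) \<partial>M)"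
      using Bochner_Integration.integral_add[OF _ i1, of "\<lambda>_. 1"] prob_space by simp
    also have "(\<integral>y. 2 * Re (F * (1 / (complex_of_real y - w))) \<partial>M) = 2 * Re (F * stieltjes M w)"
    proof -
      have "(\<integral>y. 2 * Re (F * (1 / (complex_of_real y - w))) \<partial>M) = 2 * (\<integral>y. Re (F * (1 / (complex_of_real y - w))) \<partial>M)"
        by (rule integral_mult_right_zero)
      also have "(\<integral>y. Re (F * (1 / (complex_of_real y - w))) \<partial>M) = Re (\<integral>y. F * (1 / (complex_of_real y - w)) \<partial>M)"
        by (rule integral_Re[OF i0])
      also have "(\<integral>y. F * (1 / (complex_of_real y - w)) \<partial>M) = F * stieltjes M w"
        unfolding stieltjes_def by (rule integral_mult_right_zero)
      finally show ?thesis .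
    qed
    also have "(\<integral>y. (cmod F)^2 * (1 / (cmod (complex_of_real y - w))^2) \<partial>M) = (cmod F)^2 * Ist M w"
      unfolding Ist_def by (rule integral_mult_right_zero)
    finally show ?thesis .
  qed
  also have "\<dots> = (cmod F)^2 * Ist M w - 1" using Fm by simp
  finally show "(\<integral>y. (cmod (1 + Ftrans M w / (complex_of_real y - w)))^2 \<partial>M) = (cmod (Ftrans M w))^2 * Ist M w - 1"
    unfolding F_def .
  have "Im F = Im (stieltjes M w) / (cmod (stieltjes M w))^2"
    unfolding F_def Ftrans_def by (simp add: Im_divide cmod_power2)
  moreover have "(cmod F)^2 = 1 / (cmod (stieltjes M w))^2"
    unfolding F_def Ftrans_def by (simp add: norm_divide power_divide)
  ultimately show "Im (Ftrans M w) = Im w * (cmod (Ftrans M w))^2 * Ist M w"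
    using imm unfolding F_def by simp
qed

lemma core:
  fixes Ma Mb :: "real measure" and u w :: "complex \<Rightarrow> complex" and a b Ra Rb \<sigma> :: real
  assumes Pa: "prob_space Ma" and Sa: "sets Ma = sets borel"
    and Pb: "prob_space Mb" and Sb: "sets Mb = sets borel"
    and suppR: "msupp Ma \<subseteq> {-Ra..Ra}" and suppne: "msupp Ma \<noteq> {}"
    and hA: "\<forall>\<epsilon>>0. \<exists>C. \<forall>w. Im w > 0 \<longrightarrow> (cmod (stieltjes Ma w))^2 \<le> \<epsilon> * Ist Ma w + C"
    and hB: "\<forall>N. \<exists>\<delta>>0. \<forall>w. Im w > 0 \<longrightarrow> infdist w (complex_of_real ` msupp Ma) < \<delta> \<longrightarrow> N \<le> Ist Ma w"
    and sig: "\<sigma> > 0" and Rb: "Rb \<ge> 0"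
    and hK: "\<forall>u F. Im u > 0 \<longrightarrow> \<sigma> / (cmod u + Rb)^2 \<le> (\<integral>y. (cmod (1 + F / (complex_of_real y - u)))^2 \<partial>Mb)"
    and sub: "\<forall>z. Im z > 0 \<longrightarrow> Im (u z) \<ge> Im z \<and> Im (w z) \<ge> Im z \<and>
                 u z + w z - z = Ftrans Ma (w z) \<and> u z + w z - z = Ftrans Mb (u z)"
  shows "\<exists>Cw>0. \<forall>z. Re z \<in> {a..b} \<and> 0 < Im z \<and> Im z \<le> 1 \<longrightarrow>
            Cw \<le> infdist (w z) (complex_of_real ` msupp Ma)"
proof -
  define Z0 where "Z0 = \<bar>a\<bar> + \<bar>b\<bar> + 1"
  define Q where "Q = Z0 + \<bar>Ra\<bar> + 1 + Rb"
  define Mc where "Mc = \<sigma> + 2 * Q^2"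
  have Mcpos: "Mc > 0" unfolding Mc_def using sig by (simp add: add_pos_nonneg)
  define \<epsilon> where "\<epsilon> = \<sigma> / (2 * Mc)"
  have epos: "\<epsilon> > 0" unfolding \<epsilon>_def using sig Mcpos by simp
  obtain C where hC: "\<And>w. Im w > 0 \<Longrightarrow> (cmod (stieltjes Ma w))^2 \<le> \<epsilon> * Ist Ma w + C"
    using hA epos by blast
  define N where "N = (4 + 2 * Mc * C) / \<sigma> + 1"
  obtain \<delta> where dpos: "\<delta> > 0" and hd: "\<And>w. Im w > 0 \<Longrightarrow> infdist w (complex_of_real ` msupp Ma) < \<delta> \<Longrightarrow> N \<le> Ist Ma w"
    using hB by blast
  show ?thesis
  proof (intro exI[of _ "min \<delta> 1"] conjI allI impI)
    show "min \<delta> 1 > 0" using dpos by simp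
    fix z assume zin: "Re z \<in> {a..b} \<and> 0 < Im z \<and> Im z \<le> 1"
    show "min \<delta> 1 \<le> infdist (w z) (complex_of_real ` msupp Ma)"
    proof (rule ccontr)
      assume "\<not> min \<delta> 1 \<le> infdist (w z) (complex_of_real ` msupp Ma)"
      then have lt: "infdist (w z) (complex_of_real ` msupp Ma) < min \<delta> 1" by (meson not_le)
      have eta: "Im z > 0" using zin by simp
      have zb: "cmod z \<le> Z0"
      proof -
        have "cmod z \<le> \<bar>Re z\<bar> + \<bar>Im z\<bar>" by (rule cmod_le)
        moreover have "\<bar>Re z\<bar> \<le> \<bar>a\<bar> + \<bar>b\<bar>" using zin by auto
        moreover have "\<bar>Im z\<bar> \<le> 1" using zin by auto
        ultimately show ?thesis unfolding Z0_def by linarith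
      qed
      have ne: "complex_of_real ` msupp Ma \<noteq> {}" using suppne by simp
      have "(INF x\<in>complex_of_real ` msupp Ma. dist (w z) x) < 1"
        using lt infdist_notempty[OF ne] by simp
      then obtain x where xin: "x \<in> complex_of_real ` msupp Ma" and dx: "dist (w z) x < 1"
      proof -
        have bb: "bdd_below ((\<lambda>x. dist (w z) x) ` (complex_of_real ` msupp Ma))"
          by (rule bdd_belowI2[of _ 0]) simp
        show ?thesis using cINF_less_iff[OF ne bb, of 1] that \<open>(INF x\<in>complex_of_real ` msupp Ma. dist (w z) x) < 1\<close> by blast
      qed
      obtain x0 where x0: "x0 \<in> msupp Ma" and xx: "x = complex_of_real x0" using xin by auto
      have "x0 \<in> {-Ra..Ra}" using x0 suppR by auto
      then have "\<bar>x0\<bar> \<le> \<bar>Ra\<bar>" by auto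
      then have "cmod x \<le> \<bar>Ra\<bar>" using xx by simp
      then have wb: "cmod (w z) \<le> \<bar>Ra\<bar> + 1"
        using dx norm_triangle_ineq2[of "w z" x] unfolding dist_norm by linarith
      have subz: "Im (u z) \<ge> Im z \<and> Im (w z) \<ge> Im z \<and>
                 u z + w z - z = Ftrans Ma (w z) \<and> u z + w z - z = Ftrans Mb (u z)"
        using sub eta by blast
      have wpos: "Im (w z) > 0" and upos: "Im (u z) > 0" using subz eta by linarith+
      define I where "I = Ist Ma (w z)"
      have IN: "N \<le> I" unfolding I_def using hd[OF wpos] lt by simp
      define F where "F = Ftrans Ma (w z)"
      have FMb: "F = Ftrans Mb (u z)" unfolding F_def using subz by metis
      have Fuwz: "F = u z + w z - z" unfolding F_def using subz by metis
      define Ka where "Ka = (\<integral>y. (cmod (1 + F / (complex_of_real y - w z)))^2 \<partial>Ma)"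
      define Kb where "Kb = (\<integral>y. (cmod (1 + F / (complex_of_real y - u z)))^2 \<partial>Mb)"
      define Ib where "Ib = Ist Mb (u z)"
      have Ka_eq: "Ka = (cmod F)^2 * I - 1" unfolding Ka_def F_def I_def by (rule ident(6)[OF Pa Sa wpos])
      have Kb_eq: "Kb = (cmod F)^2 * Ib - 1" unfolding Kb_def FMb Ib_def by (rule ident(6)[OF Pb Sb upos])
      have ImFa: "Im F = Im (w z) * (cmod F)^2 * I" unfolding F_def I_def by (rule ident(7)[OF Pa Sa wpos])
      have ImFb: "Im F = Im (u z) * (cmod F)^2 * Ib" unfolding FMb Ib_def by (rule ident(7)[OF Pb Sb upos])
      have Ka_nn: "Ka \<ge> 0" unfolding Ka_def by (rule integral_nonneg_AE) simp
      have Kb_low: "\<sigma> / (cmod (u z) + Rb)^2 \<le> Kb" unfolding Kb_def using hK upos by blast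
      have ImF: "Im F = Im (u z) + Im (w z) - Im z" using Fuwz by simp
      have h1: "Im F = Im (w z) + Im (w z) * Ka"
      proof -
        have "Im (w z) + Im (w z) * Ka = Im (w z) * (1 + Ka)" by (simp add: algebra_simps)
        also have "1 + Ka = (cmod F)^2 * I" using Ka_eq by simp
        finally show ?thesis using ImFa by (simp add: mult.assoc)
      qed
      have h2: "Im F = Im (u z) + Im (u z) * Kb"
      proof -
        have "Im (u z) + Im (u z) * Kb = Im (u z) * (1 + Kb)" by (simp add: algebra_simps)
        also have "1 + Kb = (cmod F)^2 * Ib" using Kb_eq by simp
        finally show ?thesis using ImFb by (simp add: mult.assoc)
      qed
      have e1: "Im (u z) - Im z = Im (w z) * Ka" using ImF h1 by linarith
      have e2: "Im (w z) - Im z = Im (u z) * Kb" using ImF h2 by linarith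
      have KK: "Ka * Kb < 1"
      proof (rule ccontr)
        assume "\<not> Ka * Kb < 1"
        then have h: "Ka * Kb \<ge> 1" by simp
        have e3: "Im (w z) = Im z + Im (u z) * Kb" using e2 by linarith
        have "Im (u z) - Im z = (Im z + Im (u z) * Kb) * Ka" using e1 e3 by simp
        also have "\<dots> = Ka * Im z + Im (u z) * (Ka * Kb)" by (simp add: algebra_simps)
        finally have "Im (u z) - Im z = Ka * Im z + Im (u z) * (Ka * Kb)" .
        moreover have "Im (u z) * (Ka * Kb) \<ge> Im (u z)" using h upos by simp
        moreover have "Ka * Im z \<ge> 0" using Ka_nn eta by simp
        ultimately show False using eta by linarith
      qed
      have ub: "cmod (u z) + Rb \<le> cmod F + Q"
      proof -
        have "u z = F + z - w z" using Fuwz by simp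
        moreover have "cmod (F + z - w z) \<le> cmod (F + z) + cmod (w z)" by (rule norm_triangle_ineq4)
        moreover have "cmod (F + z) \<le> cmod F + cmod z" by (rule norm_triangle_ineq)
        ultimately have "cmod (u z) \<le> cmod F + cmod z + cmod (w z)" by simp
        then show ?thesis using zb wb unfolding Q_def by linarith
      qed
      have upr: "cmod (u z) + Rb > 0"
      proof -
        have "\<bar>Im (u z)\<bar> \<le> cmod (u z)" by (rule abs_Im_le_cmod)
        then show ?thesis using upos Rb by linarith
      qed
      have Kb_low2: "\<sigma> / (cmod F + Q)^2 \<le> Kb"
      proof -
        have "(cmod (u z) + Rb)^2 \<le> (cmod F + Q)^2" using ub upr by (simp add: power_mono)
        then have "\<sigma> / (cmod F + Q)^2 \<le> \<sigma> / (cmod (u z) + Rb)^2"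
          using sig upr by (simp add: frac_le)
        then show ?thesis using Kb_low by linarith
      qed
      have "cmod F + Q > 0" using upr ub by linarith
      then have FQpos: "(cmod F + Q)^2 > 0" by simp
      have s1: "Ka * \<sigma> < (cmod F + Q)^2"
      proof -
        have "Ka * \<sigma> = Ka * (\<sigma> / (cmod F + Q)^2) * (cmod F + Q)^2" using FQpos by simp
        also have "\<dots> \<le> Ka * Kb * (cmod F + Q)^2"
        proof -
          have "Ka * (\<sigma> / (cmod F + Q)^2) \<le> Ka * Kb" by (rule mult_left_mono[OF Kb_low2 Ka_nn])
          then show ?thesis by (rule mult_right_mono) (use FQpos in simp)
        qed
        also have "\<dots> < (cmod F + Q)^2" using KK FQpos by simp
        finally show ?thesis .
      qed
      have s2: "(cmod F + Q)^2 \<le> 2 * (cmod F)^2 + 2 * Q^2"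
      proof -
        have "0 \<le> (cmod F - Q)^2" by simp
        then show ?thesis by (simp add: power2_diff power2_sum)
      qed
      define m where "m = stieltjes Ma (w z)"
      have mnz: "m \<noteq> 0" unfolding m_def by (rule ident(5)[OF Pa Sa wpos])
      have Fm: "(cmod F)^2 * (cmod m)^2 = 1"
        unfolding F_def Ftrans_def m_def[symmetric] using mnz by (simp add: norm_divide power_divide)
      have s3: "\<sigma> * ((cmod F)^2 * I - 1) < 2 * (cmod F)^2 + 2 * Q^2"
        using s1 s2 Ka_eq by (simp add: mult.commute)
      have s4: "\<sigma> * (I - (cmod m)^2) < 2 + 2 * Q^2 * (cmod m)^2"
      proof -
        have mp: "(cmod m)^2 > 0" using mnz by simp
        have "\<sigma> * ((cmod F)^2 * I - 1) * (cmod m)^2 < (2 * (cmod F)^2 + 2 * Q^2) * (cmod m)^2"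
          using s3 mp by (simp add: mult_strict_right_mono)
        moreover have "\<sigma> * ((cmod F)^2 * I - 1) * (cmod m)^2 = \<sigma> * (I - (cmod m)^2)"
        proof -
          have "\<sigma> * ((cmod F)^2 * I - 1) * (cmod m)^2 = \<sigma> * (((cmod F)^2 * (cmod m)^2) * I - (cmod m)^2)"
            by (simp add: algebra_simps)
          also have "\<dots> = \<sigma> * (I - (cmod m)^2)" using Fm by simp
          finally show ?thesis .
        qed
        moreover have "(2 * (cmod F)^2 + 2 * Q^2) * (cmod m)^2 = 2 + 2 * Q^2 * (cmod m)^2"
          using Fm by (simp add: algebra_simps)
        ultimately show ?thesis by simp
      qed
      have s5: "(cmod m)^2 \<le> \<epsilon> * I + C" unfolding m_def I_def by (rule hC[OF wpos])
      have "\<sigma> * I < 2 + Mc * (cmod m)^2" using s4 unfolding Mc_def by (simp add: algebra_simps)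
      also have "\<dots> \<le> 2 + Mc * (\<epsilon> * I + C)" using s5 Mcpos by simp
      also have "\<dots> = 2 + \<sigma> * I / 2 + Mc * C" unfolding \<epsilon>_def using Mcpos by (simp add: algebra_simps)
      finally have "\<sigma> * I < 4 + 2 * Mc * C" by simp
      then have "I < (4 + 2 * Mc * C) / \<sigma>" using sig by (simp add: field_simps)
      then show False using IN unfolding N_def by simp
    qed
  qed
qed



lemma B_basic:
  assumes "assumptionB \<mu> n lo hi"
  shows "prob_space \<mu>" and "sets \<mu> = sets borel"
    and "AE y in \<mu>. \<bar>y\<bar> \<le> (\<Sum>j<n. \<bar>lo j\<bar> + \<bar>hi j\<bar>)"
    and "AE y in \<mu>. \<exists>j<n. y \<in> {lo j..hi j}"
    and "\<And>t. measure \<mu> {t} = 0"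
    and "integral\<^sup>L \<mu> (\<lambda>x. x) = 0"
proof -
  from assms obtain \<rho> where rm: "\<rho> \<in> borel_measurable borel" and rnn: "\<forall>x. \<rho> x \<ge> 0"
    and md: "\<mu> = density lborel (\<lambda>x. ennreal (\<rho> x))"
    and ae0: "AE x in lborel. (\<forall>j<n. x \<notin> {lo j..hi j}) \<longrightarrow> \<rho> x = 0"
    unfolding assumptionB_def by blast
  show "prob_space \<mu>" using assms unfolding assumptionB_def by blast
  show "integral\<^sup>L \<mu> (\<lambda>x. x) = 0" using assms unfolding assumptionB_def by blast
  show S: "sets \<mu> = sets borel" using md by simp
  have me: "(\<lambda>x. ennreal (\<rho> x)) \<in> borel_measurable lborel" using rm by simp
  show ae1: "AE y in \<mu>. \<exists>j<n. y \<in> {lo j..hi j}"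
    unfolding md AE_density[OF me]
    using ae0 by eventually_elim auto
  then show "AE y in \<mu>. \<bar>y\<bar> \<le> (\<Sum>j<n. \<bar>lo j\<bar> + \<bar>hi j\<bar>)"
  proof eventually_elim
    case (elim y)
    then obtain j where j: "j < n" "y \<in> {lo j..hi j}" by blast
    have "\<bar>y\<bar> \<le> \<bar>lo j\<bar> + \<bar>hi j\<bar>" using j by auto
    also have "\<dots> \<le> (\<Sum>j<n. \<bar>lo j\<bar> + \<bar>hi j\<bar>)"
      by (rule member_le_sum[where f="\<lambda>j. \<bar>lo j\<bar> + \<bar>hi j\<bar>"]) (use j in auto)
    finally show ?case .
  qed
  fix t
  have "{t} \<in> null_sets (density lborel (\<lambda>x. ennreal (\<rho> x)))"
  proof (subst null_sets_density_iff[OF me], intro conjI)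
    show "{t} \<in> sets lborel" by simp
    show "AE x in lborel. x \<in> {t} \<longrightarrow> ennreal (\<rho> x) = 0"
      using AE_lborel_singleton[of t] by eventually_elim simp
  qed
  then have ns: "{t} \<in> null_sets \<mu>" using md by simp
  show "measure \<mu> {t} = 0" using null_setsD1[OF ns] by (simp add: measure_def)
qed

lemma sq_le:
  fixes y R :: real
  assumes "\<bar>y\<bar> \<le> R" shows "\<bar>y^2\<bar> \<le> R^2"
proof -
  have "\<bar>y\<bar>^2 \<le> R^2" by (rule power_mono[OF assms abs_ge_zero])
  then show ?thesis by simp
qed

lemma bounded_integrable:
  fixes f :: "real \<Rightarrow> real"
  assumes "prob_space M" "sets M = sets borel" "f \<in> borel_measurable borel" "AE y in M. \<bar>f y\<bar> \<le> B"
  shows "integrable M f"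
proof -
  interpret prob_space M by (rule assms(1))
  have e: "borel_measurable M = borel_measurable borel" by (rule measurable_cong_sets[OF assms(2) refl])
  show ?thesis
    by (rule integrable_const_bound[where B=B]) (use assms(3,4) e in auto)
qed

lemma Klow:
  fixes M :: "real measure"
  assumes P: "prob_space M" and S: "sets M = sets borel" and R: "R \<ge> 0"
    and bnd: "AE y in M. \<bar>y\<bar> \<le> R" and cen: "integral\<^sup>L M (\<lambda>x. x) = 0"
    and W: "Im u > 0"
  shows "(\<integral>y. y^2 \<partial>M) / (cmod u + R)^2 \<le> (\<integral>y. (cmod (1 + F / (complex_of_real y - u)))^2 \<partial>M)"
proof -
  interpret prob_space M by (rule P)
  have e: "borel_measurable M = borel_measurable borel" by (rule measurable_cong_sets[OF S refl])
  define c where "c = Re (u - F)"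
  define K where "K = (cmod u + R)^2"
  have cu: "cmod u > 0" using W by (metis abs_Im_le_cmod abs_of_pos less_le_trans)
  have "cmod u + R > 0" using cu R by linarith
  then have Kpos: "K > 0" unfolding K_def by simp
  have iy: "integrable M (\<lambda>y. y)"
    by (rule bounded_integrable[OF P S _ bnd]) simp
  have iy2: "integrable M (\<lambda>y. y^2)"
  proof (rule bounded_integrable[OF P S _ , where B="R^2"])
    show "AE y in M. \<bar>y^2\<bar> \<le> R^2" using bnd
      by eventually_elim (rule sq_le)
  qed simp
  have int1: "(\<integral>y. (y - c)^2 \<partial>M) = (\<integral>y. y^2 \<partial>M) + c^2"
  proof -
    have "(\<lambda>y. (y - c)^2) = (\<lambda>y. (y^2 - 2 * c * y) + c^2)" by (auto simp: power2_diff)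
    then have "(\<integral>y. (y - c)^2 \<partial>M) = (\<integral>y. (y^2 - 2 * c * y) + c^2 \<partial>M)" by simp
    also have "\<dots> = (\<integral>y. y^2 - 2 * c * y \<partial>M) + c^2"
      using Bochner_Integration.integral_add[of M "\<lambda>y. y^2 - 2 * c * y" "\<lambda>_. c^2"] iy iy2 prob_space by simp
    also have "(\<integral>y. y^2 - 2 * c * y \<partial>M) = (\<integral>y. y^2 \<partial>M) - 2 * c * (\<integral>y. y \<partial>M)"
      using Bochner_Integration.integral_diff[of M "\<lambda>y. y^2" "\<lambda>y. 2 * c * y"] iy iy2 by simp
    finally show ?thesis using cen by simp
  qed
  have ib: "integrable M (\<lambda>y. (cmod (1 + F / (complex_of_real y - u)))^2)"
  proof (rule integrable_const_bound[where B="(1 + cmod F / Im u)^2"])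
    show "AE y in M. norm ((cmod (1 + F / (complex_of_real y - u)))^2) \<le> (1 + cmod F / Im u)^2"
    proof (rule AE_I2)
      fix y
      have "cmod (1 + F / (complex_of_real y - u)) \<le> 1 + cmod (F / (complex_of_real y - u))"
        using norm_triangle_ineq[of 1 "F / (complex_of_real y - u)"] by simp
      also have "cmod (F / (complex_of_real y - u)) \<le> cmod F / Im u"
        using cmod_ge_Im[of u y] W by (simp add: norm_divide frac_le)
      finally show "norm ((cmod (1 + F / (complex_of_real y - u)))^2) \<le> (1 + cmod F / Im u)^2"
        by (simp add: power_mono)
    qed
    show "(\<lambda>y. (cmod (1 + F / (complex_of_real y - u)))^2) \<in> borel_measurable M"
      unfolding e by measurable
  qed
  have ic: "integrable M (\<lambda>y. (y - c)^2 / K)"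
  proof -
    have "integrable M (\<lambda>y. y^2 - 2 * c * y + c^2)" using iy iy2 by simp
    moreover have "(\<lambda>y. y^2 - 2 * c * y + c^2) = (\<lambda>y. (y - c)^2)" by (auto simp: power2_diff)
    ultimately have "integrable M (\<lambda>y. (y - c)^2)" by simp
    then show ?thesis by simp
  qed
  have pw: "AE y in M. (y - c)^2 / K \<le> (cmod (1 + F / (complex_of_real y - u)))^2"
    using bnd
  proof eventually_elim
    case (elim y)
    have d0: "cmod (complex_of_real y - u) > 0" using cmod_ge_Im[of u y] W by linarith
    have d1: "cmod (complex_of_real y - u) \<le> cmod u + R"
    proof -
      have "cmod (complex_of_real y - u) \<le> cmod (complex_of_real y) + cmod u" by (rule norm_triangle_ineq4)
      then show ?thesis using elim by simp
    qed
    have eq: "1 + F / (complex_of_real y - u) = (complex_of_real y - (u - F)) / (complex_of_real y - u)"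
      using d0 by (simp add: field_simps)
    have n1: "\<bar>y - c\<bar> \<le> cmod (complex_of_real y - (u - F))"
      using abs_Re_le_cmod[of "complex_of_real y - (u - F)"] unfolding c_def by simp
    have "(y - c)^2 / K \<le> (cmod (complex_of_real y - (u - F)))^2 / (cmod (complex_of_real y - u))^2"
    proof (rule frac_le)
      show "(y - c)^2 \<le> (cmod (complex_of_real y - (u - F)))^2"
        using n1 by (metis abs_ge_zero power2_abs power_mono)
      show "(cmod (complex_of_real y - u))^2 \<le> K" unfolding K_def using d0 d1 by (simp add: power_mono)
    qed (use d0 in auto)
    also have "\<dots> = (cmod (1 + F / (complex_of_real y - u)))^2"
      unfolding eq by (simp add: norm_divide power_divide)
    finally show ?case .
  qed
  have "(\<integral>y. y^2 \<partial>M) / K \<le> (\<integral>y. (y - c)^2 \<partial>M) / K"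
    using int1 Kpos by (simp add: divide_right_mono)
  also have "\<dots> = (\<integral>y. (y - c)^2 / K \<partial>M)" by simp
  also have "\<dots> \<le> (\<integral>y. (cmod (1 + F / (complex_of_real y - u)))^2 \<partial>M)"
    by (rule integral_mono_AE[OF ic ib pw])
  finally show ?thesis unfolding K_def .
qed

lemma sigpos:
  assumes "assumptionB \<mu> n lo hi"
  shows "(\<integral>y. y^2 \<partial>\<mu>) > 0"
proof -
  have P: "prob_space \<mu>" and S: "sets \<mu> = sets borel"
    and bnd: "AE y in \<mu>. \<bar>y\<bar> \<le> (\<Sum>j<n. \<bar>lo j\<bar> + \<bar>hi j\<bar>)"
    and pt: "\<And>t. measure \<mu> {t} = 0"
    by (rule B_basic(1)[OF assms], rule B_basic(2)[OF assms], rule B_basic(3)[OF assms], rule B_basic(5)[OF assms])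
  interpret prob_space \<mu> by (rule P)
  define R where "R = (\<Sum>j<n. \<bar>lo j\<bar> + \<bar>hi j\<bar>)"
  have iy2: "integrable \<mu> (\<lambda>y. y^2)"
  proof (rule bounded_integrable[OF P S _ , where B="R^2"])
    show "AE y in \<mu>. \<bar>y^2\<bar> \<le> R^2" using bnd unfolding R_def
      by eventually_elim (rule sq_le)
  qed simp
  have nn: "AE y in \<mu>. 0 \<le> y^2" by simp
  have ge: "(\<integral>y. y^2 \<partial>\<mu>) \<ge> 0" by (rule integral_nonneg_AE[OF nn])
  have "(\<integral>y. y^2 \<partial>\<mu>) \<noteq> 0"
  proof
    assume "(\<integral>y. y^2 \<partial>\<mu>) = 0"
    then have a1: "AE y in \<mu>. y^2 = 0" using integral_nonneg_eq_0_iff_AE[OF iy2 nn] by simp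
    have "emeasure \<mu> {0} = 0" using pt[of 0] emeasure_eq_measure[of "{0}"] by simp
    moreover have "{0} \<in> sets \<mu>" using S by simp
    ultimately have "{0} \<in> null_sets \<mu>" by (rule null_setsI)
    then have a2: "AE y in \<mu>. y \<notin> {0}" by (rule AE_not_in)
    have "AE y in \<mu>. False" using a1 a2 by eventually_elim simp
    then show False by simp
  qed
  then show ?thesis using ge by linarith
qed



lemma smallmass:
  fixes M :: "real measure"
  assumes P: "prob_space M" and S: "sets M = sets borel" and pt: "\<And>t. measure M {t} = 0"
    and bnd: "AE y in M. \<bar>y\<bar> \<le> R"
  shows "\<forall>\<epsilon>>0. \<exists>r>0. r \<le> 1 \<and> (\<forall>t. measure M {t - r..t + r} \<le> \<epsilon>)"
proof (intro allI impI)
  fix \<epsilon> :: real assume ep: "\<epsilon> > 0"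
  interpret prob_space M by (rule P)
  interpret real_distribution M by unfold_locales (rule S)
  define K where "K = {-\<bar>R\<bar> - 3..\<bar>R\<bar> + 3}"
  have "continuous_on K (cdf M)"
    by (rule continuous_at_imp_continuous_on) (use isCont_cdf pt in auto)
  then have "uniformly_continuous_on K (cdf M)"
    unfolding K_def by (rule compact_uniformly_continuous) simp
  then obtain d where dpos: "d > 0"
    and hd: "\<And>x x'. x \<in> K \<Longrightarrow> x' \<in> K \<Longrightarrow> dist x' x < d \<Longrightarrow> dist (cdf M x') (cdf M x) < \<epsilon>"
    unfolding uniformly_continuous_on_def using ep by metis
  define r where "r = min 1 (d / 4)"
  have rpos: "r > 0" unfolding r_def using dpos by simp
  show "\<exists>r>0. r \<le> 1 \<and> (\<forall>t. measure M {t - r..t + r} \<le> \<epsilon>)"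
  proof (intro exI[of _ r] conjI allI)
    show "r > 0" by (rule rpos)
    show "r \<le> 1" unfolding r_def by simp
    fix t
    show "measure M {t - r..t + r} \<le> \<epsilon>"
    proof (cases "\<bar>t\<bar> \<le> \<bar>R\<bar> + 1")
      case True
      have "measure M {t - r..t + r} \<le> measure M {t - 2 * r<..t + r}"
        by (rule finite_measure_mono) (use rpos in auto)
      also have "\<dots> = cdf M (t + r) - cdf M (t - 2 * r)"
        by (rule cdf_diff_eq[symmetric]) (use rpos in simp)
      also have "\<dots> < \<epsilon>"
      proof -
        have k1: "t + r \<in> K" and k2: "t - 2 * r \<in> K" using True rpos unfolding K_def r_def by auto
        have dd: "dist (t + r) (t - 2 * r) < d" using rpos unfolding r_def dist_real_def by auto
        have "dist (cdf M (t + r)) (cdf M (t - 2 * r)) < \<epsilon>" by (rule hd[OF k2 k1 dd])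
        then show ?thesis unfolding dist_real_def by simp
      qed
      finally show ?thesis by simp
    next
      case False
      have "AE y in M. y \<notin> {t - r..t + r}"
        using bnd
      proof eventually_elim
        case (elim y)
        then show ?case using False unfolding r_def by auto
      qed
      then have "{t - r..t + r} \<in> null_sets M" using AE_iff_null_sets[of "{t - r..t + r}" M] S by simp
      then show ?thesis using ep by (simp add: measure_def null_setsD1)
    qed
  qed
qed

lemma stbound:
  fixes M :: "real measure"
  assumes P: "prob_space M" and S: "sets M = sets borel"
    and small: "\<forall>\<epsilon>>0. \<exists>r>0. r \<le> 1 \<and> (\<forall>t. measure M {t - r..t + r} \<le> \<epsilon>)"
  shows "\<forall>\<epsilon>>0. \<exists>C. \<forall>w. Im w > 0 \<longrightarrow> (cmod (stieltjes M w))^2 \<le> \<epsilon> * Ist M w + C"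
proof (intro allI impI)
  fix \<epsilon> :: real assume ep: "\<epsilon> > 0"
  interpret prob_space M by (rule P)
  have e: "borel_measurable M = borel_measurable borel" by (rule measurable_cong_sets[OF S refl])
  define b where "b = \<epsilon> / 4"
  have bpos: "b > 0" unfolding b_def using ep by simp
  obtain r where rpos: "r > 0" and hr: "\<And>t. measure M {t - r..t + r} \<le> b"
    using small bpos by blast
  show "\<exists>C. \<forall>w. Im w > 0 \<longrightarrow> (cmod (stieltjes M w))^2 \<le> \<epsilon> * Ist M w + C"
  proof (intro exI[of _ "2 / r^2"] allI impI)
    fix w :: complex assume W: "Im w > 0"
    define I where "I = Ist M w"
    have Ipos: "I > 0" unfolding I_def by (rule ident(3)[OF P S W])
    define q where "q = sqrt (b * I)"
    have qpos: "q > 0" unfolding q_def using bpos Ipos by simp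
    have qsq: "q^2 = b * I" unfolding q_def using bpos Ipos by simp
    define \<theta> where "\<theta> = q / I"
    have thpos: "\<theta> > 0" unfolding \<theta>_def using qpos Ipos by simp
    define SS where "SS = {Re w - r..Re w + r}"
    define g where "g = (\<lambda>y. \<theta> / 2 * (1 / (cmod (complex_of_real y - w))^2) + indicator SS y / (2 * \<theta>) + 1 / r)"
    have ih: "integrable M (\<lambda>y. 1 / (cmod (complex_of_real y - w))^2)" by (rule ident(2)[OF P S W])
    have iS: "integrable M (indicator SS :: real \<Rightarrow> real)"
      by (rule integrable_real_indicator) (use S emeasure_finite in \<open>auto simp: SS_def less_top[symmetric]\<close>)
    have ig: "integrable M g" unfolding g_def
      using ih iS by (intro Bochner_Integration.integrable_add integrable_mult_right integrable_divide) auto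
    have pw: "norm (1 / (complex_of_real y - w)) \<le> g y" for y
    proof -
      have d0: "cmod (complex_of_real y - w) > 0" using cmod_ge_Im[of w y] W by linarith
      define h where "h = 1 / cmod (complex_of_real y - w)"
      have hpos: "h > 0" unfolding h_def using d0 by simp
      have nh: "norm (1 / (complex_of_real y - w)) = h" unfolding h_def by (simp add: norm_divide)
      have h2: "1 / (cmod (complex_of_real y - w))^2 = h^2" unfolding h_def by (simp add: power_divide)
      show ?thesis
      proof (cases "y \<in> SS")
        case True
        have "h \<le> \<theta> / 2 * h^2 + 1 / (2 * \<theta>)"
        proof -
          have "0 \<le> (\<theta> * h - 1)^2" by simp
          then have "2 * \<theta> * h \<le> \<theta>^2 * h^2 + 1" by (simp add: power2_diff power_mult_distrib algebra_simps)
          then have "h \<le> (\<theta>^2 * h^2 + 1) / (2 * \<theta>)"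
            using thpos by (simp add: pos_le_divide_eq mult.commute mult.left_commute)
          moreover have "\<theta> / 2 * h^2 + 1 / (2 * \<theta>) = (\<theta>^2 * h^2 + 1) / (2 * \<theta>)"
            using thpos by (simp add: field_simps power2_eq_square)
          ultimately show ?thesis by simp
        qed
        moreover have "0 < 1 / r" using rpos by simp
        moreover have "g y = \<theta> / 2 * h^2 + 1 / (2 * \<theta>) + 1 / r" unfolding g_def h2 using True by simp
        ultimately show ?thesis unfolding nh by linarith
      next
        case False
        then have "\<bar>y - Re w\<bar> > r" unfolding SS_def by auto
        moreover have "\<bar>Re (complex_of_real y - w)\<bar> \<le> cmod (complex_of_real y - w)" by (rule abs_Re_le_cmod)
        ultimately have "cmod (complex_of_real y - w) > r" by simp
        then have "h < 1 / r" unfolding h_def using rpos by (simp add: frac_less2)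
        moreover have "0 \<le> \<theta> / 2 * h^2" using thpos by simp
        moreover have "g y = \<theta> / 2 * h^2 + 1 / r" unfolding g_def h2 using False by simp
        ultimately show ?thesis unfolding nh by linarith
      qed
    qed
    have "cmod (stieltjes M w) \<le> integral\<^sup>L M g"
      unfolding stieltjes_def
      by (rule Bochner_Integration.integral_norm_bound_integral[OF ident(1)[OF P S W] ig pw])
    also have "integral\<^sup>L M g = \<theta> / 2 * I + measure M SS / (2 * \<theta>) + 1 / r"
    proof -
      have i1: "integrable M (\<lambda>y. \<theta> / 2 * (1 / (cmod (complex_of_real y - w))^2))" using ih by (rule integrable_mult_right)
      have i2: "integrable M (\<lambda>y. indicator SS y / (2 * \<theta>) :: real)" using iS by simp
      have "integral\<^sup>L M g = (\<integral>y. \<theta> / 2 * (1 / (cmod (complex_of_real y - w))^2) + indicator SS y / (2 * \<theta>) \<partial>M) + 1 / r"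
        unfolding g_def using Bochner_Integration.integral_add[of M _ "\<lambda>_. 1 / r"] i1 i2 prob_space by simp
      also have "(\<integral>y. \<theta> / 2 * (1 / (cmod (complex_of_real y - w))^2) + indicator SS y / (2 * \<theta>) \<partial>M)
          = (\<integral>y. \<theta> / 2 * (1 / (cmod (complex_of_real y - w))^2) \<partial>M) + (\<integral>y. indicator SS y / (2 * \<theta>) \<partial>M)"
        by (rule Bochner_Integration.integral_add[OF i1 i2])
      also have "(\<integral>y. \<theta> / 2 * (1 / (cmod (complex_of_real y - w))^2) \<partial>M) = \<theta> / 2 * I"
        unfolding I_def Ist_def by (rule integral_mult_right_zero)
      also have "(\<integral>y. indicator SS y / (2 * \<theta>) \<partial>M) = measure M SS / (2 * \<theta>)"
        using S by (simp add: SS_def)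
      finally show ?thesis .
    qed
    also have "\<dots> \<le> \<theta> / 2 * I + b / (2 * \<theta>) + 1 / r"
      using hr[of "Re w"] thpos unfolding SS_def by (simp add: divide_right_mono)
    also have "\<theta> / 2 * I + b / (2 * \<theta>) = q"
    proof -
      have "\<theta> / 2 * I = q / 2" unfolding \<theta>_def using Ipos by simp
      moreover have "b / (2 * \<theta>) = q / 2"
        unfolding \<theta>_def using Ipos qpos qsq by (simp add: field_simps power2_eq_square)
      ultimately show ?thesis by simp
    qed
    finally have mb: "cmod (stieltjes M w) \<le> q + 1 / r" .
    have "(cmod (stieltjes M w))^2 \<le> (q + 1 / r)^2" by (rule power_mono[OF mb]) simp
    also have "\<dots> \<le> 2 * q^2 + 2 * (1 / r)^2"
    proof -
      have "0 \<le> (q - 1 / r)^2" by simp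
      then show ?thesis by (simp add: power2_diff power2_sum)
    qed
    also have "\<dots> = \<epsilon> / 2 * I + 2 / r^2" using qsq unfolding b_def by (simp add: power_divide)
    also have "\<dots> \<le> \<epsilon> * Ist M w + 2 / r^2" using Ipos ep unfolding I_def by simp
    finally show "(cmod (stieltjes M w))^2 \<le> \<epsilon> * Ist M w + 2 / r^2" .
  qed
qed



lemma powlow:
  fixes q t D s ss :: real
  assumes "0 < q" "q \<le> t" "t \<le> D" "s \<le> ss" "0 \<le> ss"
  shows "D powr (s - ss) * q powr ss \<le> t powr s"
proof -
  have tpos: "t > 0" using assms by linarith
  have "t powr s = t powr ss * t powr (s - ss)" by (simp add: powr_add[symmetric])
  moreover have "q powr ss \<le> t powr ss" by (rule powr_mono2) (use assms in auto)
  moreover have "D powr (s - ss) \<le> t powr (s - ss)" by (rule powr_mono2') (use assms tpos in auto)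
  ultimately show ?thesis
    by (metis mult.commute mult_mono powr_ge_zero)
qed

lemma dens_low:
  fixes \<rho> :: "real \<Rightarrow> real"
  assumes md: "\<mu> = density lborel (\<lambda>x. ennreal (\<rho> x))" and rm: "\<rho> \<in> borel_measurable borel"
    and P: "prob_space \<mu>" and ab: "a \<le> b" and c: "c \<ge> 0"
    and ae: "AE x in lborel. x \<in> {a..b} \<longrightarrow> c \<le> \<rho> x"
  shows "c * (b - a) \<le> measure \<mu> {a..b}"
proof -
  interpret prob_space \<mu> by (rule P)
  have me: "(\<lambda>x. ennreal (\<rho> x)) \<in> borel_measurable lborel" using rm by simp
  have "emeasure \<mu> {a..b} = (\<integral>\<^sup>+ x. ennreal (\<rho> x) * indicator {a..b} x \<partial>lborel)"
    unfolding md by (rule emeasure_density[OF me]) simp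
  also have "\<dots> \<ge> (\<integral>\<^sup>+ x. ennreal c * indicator {a..b} x \<partial>lborel)"
  proof (rule nn_integral_mono_AE)
    show "AE x in lborel. ennreal c * indicator {a..b} x \<le> ennreal (\<rho> x) * indicator {a..b} x"
      using ae by eventually_elim (auto simp: indicator_def intro: ennreal_leI)
  qed
  moreover have "(\<integral>\<^sup>+ x. ennreal c * indicator {a..b} x \<partial>lborel) = ennreal (c * (b - a))"
    using ab c by (simp add: nn_integral_cmult_indicator ennreal_mult)
  ultimately have "ennreal (c * (b - a)) \<le> emeasure \<mu> {a..b}" by simp
  then have "ennreal (c * (b - a)) \<le> ennreal (measure \<mu> {a..b})" by (simp add: emeasure_eq_measure)
  then show ?thesis by (simp add: ennreal_le_iff)
qed

lemma massB:
  fixes \<rho> :: "real \<Rightarrow> real" and lo hi C s s' :: real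
  assumes lohi: "lo < hi" and rm: "\<rho> \<in> borel_measurable borel"
    and md: "\<mu> = density lborel (\<lambda>x. ennreal (\<rho> x))" and P: "prob_space \<mu>"
    and C: "C > 0" and s: "s < 1" and s': "s' < 1"
    and ae: "AE x in lborel. x \<in> {lo..hi} \<longrightarrow> inverse C < \<rho> x / ((x - lo) powr s * (hi - x) powr s')"
  shows "\<exists>\<kappa>>0. \<forall>x0\<in>{lo..hi}. \<forall>r. 0 < r \<and> r \<le> (hi - lo) / 4 \<longrightarrow>
            \<kappa> * r powr (1 + max 0 (max s s')) \<le> measure \<mu> {x0 - r..x0 + r}"
proof -
  define ss where "ss = max 0 (max s s')"
  have ss0: "0 \<le> ss" and sss: "s \<le> ss" and sss': "s' \<le> ss" unfolding ss_def by auto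
  define D where "D = hi - lo"
  have Dpos: "D > 0" unfolding D_def using lohi by simp
  define \<kappa>0 where "\<kappa>0 = D powr (s - ss) * D powr (s' - ss) * (D / 3) powr ss"
  have k0pos: "\<kappa>0 > 0" unfolding \<kappa>0_def using Dpos by simp
  define \<kappa> where "\<kappa> = \<kappa>0 / C / 3 powr (1 + ss)"
  have kpos: "\<kappa> > 0" unfolding \<kappa>_def using k0pos C by simp
  show ?thesis
  proof (intro exI[of _ \<kappa>] conjI ballI allI impI)
    show "\<kappa> > 0" by (rule kpos)
    fix x0 r assume x0: "x0 \<in> {lo..hi}" and r: "0 < r \<and> r \<le> (hi - lo) / 4"
    have rpos: "r > 0" and rD: "r \<le> D / 4" using r unfolding D_def by auto
    define p where "p = (if x0 \<le> lo + D / 2 then x0 + r / 3 else x0 - 2 * r / 3)"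
    define c where "c = \<kappa>0 * (r / 3) powr ss / C"
    have cpos: "c > 0" unfolding c_def using k0pos C rpos by simp
    have Jsub: "{p..p + r / 3} \<subseteq> {x0 - r..x0 + r}" unfolding p_def using rpos by auto
    have Jprop: "lo < y \<and> y < hi \<and> \<kappa>0 * (r / 3) powr ss \<le> (y - lo) powr s * (hi - y) powr s'"
      if y: "y \<in> {p..p + r / 3}" for y
    proof (cases "x0 \<le> lo + D / 2")
      case True
      then have pe: "p = x0 + r / 3" unfolding p_def by simp
      have y1: "p \<le> y" "y \<le> p + r / 3" using y by auto
      have x1: "lo \<le> x0" "x0 \<le> hi" using x0 by auto
      have Dd: "D = hi - lo" by (simp add: D_def)
      have yb: "r / 3 \<le> y - lo" "y - lo \<le> D" "D / 3 \<le> hi - y" "hi - y \<le> D"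
        using y1 pe x1 rpos rD True Dd by linarith+
      have a1: "D powr (s - ss) * (r / 3) powr ss \<le> (y - lo) powr s"
        by (rule powlow) (use yb rpos sss ss0 in auto)
      have a2: "D powr (s' - ss) * (D / 3) powr ss \<le> (hi - y) powr s'"
        by (rule powlow) (use yb Dpos sss' ss0 in auto)
      have "\<kappa>0 * (r / 3) powr ss = (D powr (s - ss) * (r / 3) powr ss) * (D powr (s' - ss) * (D / 3) powr ss)"
        unfolding \<kappa>0_def by (simp add: algebra_simps)
      also have "\<dots> \<le> (y - lo) powr s * (hi - y) powr s'"
        by (rule mult_mono[OF a1 a2]) auto
      finally show ?thesis using yb rpos Dpos by auto
    next
      case False
      then have pe: "p = x0 - 2 * r / 3" unfolding p_def by simp
      have y1: "p \<le> y" "y \<le> p + r / 3" using y by auto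
      have x1: "lo \<le> x0" "x0 \<le> hi" using x0 by auto
      have Dd: "D = hi - lo" by (simp add: D_def)
      have yb: "D / 3 \<le> y - lo" "y - lo \<le> D" "r / 3 \<le> hi - y" "hi - y \<le> D"
        using y1 pe x1 rpos rD False Dd by linarith+
      have a1: "D powr (s - ss) * (D / 3) powr ss \<le> (y - lo) powr s"
        by (rule powlow) (use yb Dpos sss ss0 in auto)
      have a2: "D powr (s' - ss) * (r / 3) powr ss \<le> (hi - y) powr s'"
        by (rule powlow) (use yb rpos sss' ss0 in auto)
      have "\<kappa>0 * (r / 3) powr ss = (D powr (s - ss) * (D / 3) powr ss) * (D powr (s' - ss) * (r / 3) powr ss)"
        unfolding \<kappa>0_def by (simp add: algebra_simps)
      also have "\<dots> \<le> (y - lo) powr s * (hi - y) powr s'"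
        by (rule mult_mono[OF a1 a2]) auto
      finally show ?thesis using yb rpos Dpos by auto
    qed
    have aeJ: "AE x in lborel. x \<in> {p..p + r / 3} \<longrightarrow> c \<le> \<rho> x"
      using ae
    proof eventually_elim
      case (elim x)
      show ?case
      proof
        assume xJ: "x \<in> {p..p + r / 3}"
        have jp: "lo < x \<and> x < hi \<and> \<kappa>0 * (r / 3) powr ss \<le> (x - lo) powr s * (hi - x) powr s'"
          by (rule Jprop[OF xJ])
        define Px where "Px = (x - lo) powr s * (hi - x) powr s'"
        have Ppos: "Px > 0" unfolding Px_def using jp by simp
        have "inverse C < \<rho> x / Px" using elim jp unfolding Px_def by auto
        then have "Px / C < \<rho> x" using Ppos C by (simp add: field_simps)
        moreover have "c \<le> Px / C" unfolding c_def Px_def using jp C by (simp add: divide_right_mono)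
        ultimately show "c \<le> \<rho> x" by simp
      qed
    qed
    have "c * (p + r / 3 - p) \<le> measure \<mu> {p..p + r / 3}"
      by (rule dens_low[OF md rm P]) (use rpos cpos aeJ in auto)
    also have "\<dots> \<le> measure \<mu> {x0 - r..x0 + r}"
    proof -
      interpret prob_space \<mu> by (rule P)
      show ?thesis by (rule finite_measure_mono[OF Jsub]) (simp add: md)
    qed
    finally have m1: "c * (r / 3) \<le> measure \<mu> {x0 - r..x0 + r}" by simp
    have "c * (r / 3) = \<kappa> * r powr (1 + ss)"
    proof -
      have h1: "(r / 3) powr ss = r powr ss / 3 powr ss" using rpos by (simp add: powr_divide)
      have h2: "r powr (1 + ss) = r * r powr ss" using rpos by (simp add: powr_add)
      have h3: "(3::real) powr (1 + ss) = 3 * 3 powr ss" by (simp add: powr_add)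
      have h4: "(3::real) powr ss > 0" by simp
      show ?thesis unfolding c_def \<kappa>_def h1 h2 h3 using h4 C by (simp add: field_simps)
    qed
    then show "\<kappa> * r powr (1 + max 0 (max s s')) \<le> measure \<mu> {x0 - r..x0 + r}"
      using m1 unfolding ss_def by simp
  qed
qed



lemma Ilow_j:
  fixes \<rho> :: "real \<Rightarrow> real" and lo hi C s s' :: real
  assumes lohi: "lo < hi" and rm: "\<rho> \<in> borel_measurable borel"
    and md: "\<mu> = density lborel (\<lambda>x. ennreal (\<rho> x))" and P: "prob_space \<mu>"
    and C: "C > 0" and s: "s < 1" and s': "s' < 1"
    and ae: "AE x in lborel. x \<in> {lo..hi} \<longrightarrow> inverse C < \<rho> x / ((x - lo) powr s * (hi - x) powr s')"
  shows "\<forall>N. \<exists>\<delta>>0. \<forall>x0\<in>{lo..hi}. \<forall>w. Im w > 0 \<longrightarrow> cmod (w - complex_of_real x0) < \<delta> \<longrightarrow> N \<le> Ist \<mu> w"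
proof
  fix N :: real
  have S: "sets \<mu> = sets borel" using md by simp
  obtain \<kappa> where kpos: "\<kappa> > 0" and hk: "\<And>x0 r. x0 \<in> {lo..hi} \<Longrightarrow> 0 < r \<Longrightarrow> r \<le> (hi - lo) / 4 \<Longrightarrow>
            \<kappa> * r powr (1 + max 0 (max s s')) \<le> measure \<mu> {x0 - r..x0 + r}"
    using massB[OF lohi rm md P C s s' ae] by blast
  define ss where "ss = max 0 (max s s')"
  define e where "e = 1 - ss"
  have epos: "e > 0" unfolding e_def ss_def using s s' by simp
  define N' where "N' = max N 1"
  have N'pos: "N' > 0" unfolding N'_def by simp
  define X where "X = (\<kappa> / (4 * N')) powr (1 / e)"
  have Xpos: "X > 0" unfolding X_def using kpos N'pos by simp
  define r where "r = min ((hi - lo) / 4) X"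
  have rpos: "r > 0" unfolding r_def using lohi Xpos by simp
  show "\<exists>\<delta>>0. \<forall>x0\<in>{lo..hi}. \<forall>w. Im w > 0 \<longrightarrow> cmod (w - complex_of_real x0) < \<delta> \<longrightarrow> N \<le> Ist \<mu> w"
  proof (intro exI[of _ r] conjI ballI allI impI)
    show "r > 0" by (rule rpos)
    fix x0 w assume x0: "x0 \<in> {lo..hi}" and W: "Im w > 0" and dw: "cmod (w - complex_of_real x0) < r"
    interpret prob_space \<mu> by (rule P)
    define SS where "SS = {x0 - r..x0 + r}"
    have mS: "\<kappa> * r powr (1 + ss) \<le> measure \<mu> SS"
      unfolding SS_def ss_def by (rule hk[OF x0 rpos]) (simp add: r_def min_def)
    have ih: "integrable \<mu> (\<lambda>y. 1 / (cmod (complex_of_real y - w))^2)" by (rule ident(2)[OF P S W])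
    have iS: "integrable \<mu> (\<lambda>y. indicator SS y / (4 * r^2) :: real)"
      using S emeasure_finite by (simp add: SS_def less_top[symmetric])
    have pw: "indicator SS y / (4 * r^2) \<le> 1 / (cmod (complex_of_real y - w))^2" for y
    proof (cases "y \<in> SS")
      case True
      have d0: "cmod (complex_of_real y - w) > 0" using cmod_ge_Im[of w y] W by linarith
      have "complex_of_real y - w = complex_of_real (y - x0) - (w - complex_of_real x0)" by simp
      then have "cmod (complex_of_real y - w) \<le> cmod (complex_of_real (y - x0)) + cmod (w - complex_of_real x0)"
        by (metis norm_triangle_ineq4)
      moreover have "cmod (complex_of_real (y - x0)) \<le> r"
      proof -
        have "cmod (complex_of_real (y - x0)) = \<bar>y - x0\<bar>" by (rule norm_of_real)
        moreover have "\<bar>y - x0\<bar> \<le> r" using True unfolding SS_def by auto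
        ultimately show ?thesis by simp
      qed
      ultimately have "cmod (complex_of_real y - w) < 2 * r" using dw by simp
      then have "(cmod (complex_of_real y - w))^2 \<le> (2 * r)^2" using d0 by (intro power_mono) auto
      then have "1 / (2 * r)^2 \<le> 1 / (cmod (complex_of_real y - w))^2"
        using d0 by (simp add: frac_le)
      then show ?thesis using True by (simp add: power_mult_distrib)
    next
      case False
      then show ?thesis by simp
    qed
    have "measure \<mu> SS / (4 * r^2) = (\<integral>y. indicator SS y / (4 * r^2) \<partial>\<mu>)"
      using S by (simp add: SS_def)
    also have "\<dots> \<le> Ist \<mu> w" unfolding Ist_def by (rule integral_mono[OF iS ih pw])
    finally have m2: "measure \<mu> SS / (4 * r^2) \<le> Ist \<mu> w" .
    have r2: "r^2 = r powr (1 + ss) * r powr e"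
    proof -
      have "r powr (1 + ss) * r powr e = r powr 2" unfolding e_def by (simp add: powr_add[symmetric])
      also have "\<dots> = r^2" using rpos by (simp add: powr_numeral)
      finally show ?thesis by simp
    qed
    have re: "r powr e \<le> \<kappa> / (4 * N')"
    proof -
      have rX: "r \<le> X" unfolding r_def by simp
      have "r powr e \<le> X powr e" using epos rpos rX by (intro powr_mono2) auto
      also have "X powr e = \<kappa> / (4 * N')" unfolding X_def using epos kpos N'pos by (simp add: powr_powr)
      finally show ?thesis .
    qed
    have rep: "r powr e > 0" using rpos by simp
    have rsp: "r powr (1 + ss) > 0" using rpos by simp
    have "N' \<le> \<kappa> / (4 * r powr e)"
      using re rep N'pos kpos by (simp add: field_simps)
    also have "\<kappa> / (4 * r powr e) = \<kappa> * r powr (1 + ss) / (4 * r^2)"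
      unfolding r2 using rsp by (simp add: field_simps)
    also have "\<dots> \<le> measure \<mu> SS / (4 * r^2)" using mS rpos by (simp add: divide_right_mono)
    also have "\<dots> \<le> Ist \<mu> w" by (rule m2)
    finally show "N \<le> Ist \<mu> w" unfolding N'_def by simp
  qed
qed



lemma B_data:
  assumes "assumptionB \<mu> n lo hi"
  obtains \<rho> C slo shi where "n \<ge> 1" "\<forall>j<n. lo j < hi j" "\<rho> \<in> borel_measurable borel"
    "\<mu> = density lborel (\<lambda>x. ennreal (\<rho> x))" "prob_space \<mu>" "C > 0"
    "\<forall>j<n. -1 < slo j \<and> slo j < 1 \<and> -1 < shi j \<and> shi j < 1"
    "\<forall>j<n. AE x in lborel. x \<in> {lo j..hi j} \<longrightarrow>
            inverse C < \<rho> x / ((x - lo j) powr slo j * (hi j - x) powr shi j)"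
proof -
  have h1: "n \<ge> 1" "\<forall>j<n. lo j < hi j" "prob_space \<mu>" using assms unfolding assumptionB_def by blast+
  obtain \<rho> C slo shi where
        "\<rho> \<in> borel_measurable borel" 
        "\<mu> = density lborel (\<lambda>x. ennreal (\<rho> x))" "C > 0"
        "(\<forall>j<n. -1 < slo j \<and> slo j < 1 \<and> -1 < shi j \<and> shi j < 1)"
        and ae: "(\<forall>j<n. AE x in lborel. x \<in> {lo j..hi j} \<longrightarrow>
            inverse C < \<rho> x / ((x - lo j) powr slo j * (hi j - x) powr shi j) \<and>
            \<rho> x / ((x - lo j) powr slo j * (hi j - x) powr shi j) < C)"
    using assms unfolding assumptionB_def by blast
  moreover have "\<forall>j<n. AE x in lborel. x \<in> {lo j..hi j} \<longrightarrow>
            inverse C < \<rho> x / ((x - lo j) powr slo j * (hi j - x) powr shi j)"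
  proof (intro allI impI)
    fix j assume "j < n"
    then show "AE x in lborel. x \<in> {lo j..hi j} \<longrightarrow>
            inverse C < \<rho> x / ((x - lo j) powr slo j * (hi j - x) powr shi j)"
      using ae by (auto elim: eventually_mono)
  qed
  ultimately show thesis using h1 that by blast
qed

lemma msupp_sub:
  assumes AB: "assumptionB \<mu> n lo hi"
  shows "msupp \<mu> \<subseteq> (\<Union>j<n. {lo j..hi j})"
proof
  fix x assume xm: "x \<in> msupp \<mu>"
  define U where "U = (\<Union>j<n. {lo j..hi j})"
  show "x \<in> (\<Union>j<n. {lo j..hi j})"
  proof (rule ccontr)
    assume "x \<notin> (\<Union>j<n. {lo j..hi j})"
    then have nx: "x \<in> - U" unfolding U_def by simp
    have "closed U" unfolding U_def by (intro closed_UN) auto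
    then have "open (- U)" by auto
    then obtain e where epos: "e > 0" and be: "ball x e \<subseteq> - U"
      using nx open_contains_ball by blast
    have S: "sets \<mu> = sets borel" by (rule B_basic(2)[OF AB])
    have "AE y in \<mu>. y \<notin> ball x e"
      using B_basic(4)[OF AB]
    proof eventually_elim
      case (elim y)
      then have "y \<in> U" unfolding U_def by auto
      then show ?case using be by auto
    qed
    then have "ball x e \<in> null_sets \<mu>" using AE_iff_null_sets[of "ball x e" \<mu>] S by simp
    then have "emeasure \<mu> (ball x e) = 0" by (rule null_setsD1)
    moreover have "emeasure \<mu> (ball x e) > 0" using xm epos unfolding msupp_def by blast
    ultimately show False by simp
  qed
qed

lemma msupp_ne:
  assumes AB: "assumptionB \<mu> n lo hi"
  shows "lo 0 \<in> msupp \<mu>"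
proof -
  obtain \<rho> C slo shi where n1: "n \<ge> 1" and lh: "\<forall>j<n. lo j < hi j" and rm: "\<rho> \<in> borel_measurable borel"
    and md: "\<mu> = density lborel (\<lambda>x. ennreal (\<rho> x))" and P: "prob_space \<mu>" and C: "C > 0"
    and sl: "\<forall>j<n. -1 < slo j \<and> slo j < 1 \<and> -1 < shi j \<and> shi j < 1"
    and ae: "\<forall>j<n. AE x in lborel. x \<in> {lo j..hi j} \<longrightarrow>
            inverse C < \<rho> x / ((x - lo j) powr slo j * (hi j - x) powr shi j)"
    by (rule B_data[OF AB])
  have j0: "0 < n" using n1 by simp
  obtain \<kappa> where kpos: "\<kappa> > 0" and hk: "\<forall>x0\<in>{lo 0..hi 0}. \<forall>r. 0 < r \<and> r \<le> (hi 0 - lo 0) / 4 \<longrightarrow>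
            \<kappa> * r powr (1 + max 0 (max (slo 0) (shi 0))) \<le> measure \<mu> {x0 - r..x0 + r}"
    using massB[OF _ rm md P C _ _ ae[rule_format, OF j0]] lh sl j0 by blast
  interpret prob_space \<mu> by (rule P)
  have S: "sets \<mu> = sets borel" using md by simp
  show ?thesis unfolding msupp_def
  proof (intro CollectI allI impI)
    fix e :: real assume epos: "e > 0"
    define r where "r = min (e / 2) ((hi 0 - lo 0) / 4)"
    have rpos: "r > 0" unfolding r_def using epos lh j0 by simp
    have r4: "r \<le> (hi 0 - lo 0) / 4" unfolding r_def by (simp add: min_def)
    have l0: "lo 0 \<in> {lo 0..hi 0}" using lh j0 by auto
    have "\<kappa> * r powr (1 + max 0 (max (slo 0) (shi 0))) \<le> measure \<mu> {lo 0 - r..lo 0 + r}"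
      using hk l0 rpos r4 by blast
    moreover have "\<kappa> * r powr (1 + max 0 (max (slo 0) (shi 0))) > 0" using kpos rpos by simp
    ultimately have mpos: "measure \<mu> {lo 0 - r..lo 0 + r} > 0" by linarith
    have sub: "{lo 0 - r..lo 0 + r} \<subseteq> ball (lo 0) e" using rpos epos unfolding r_def
      by (auto simp: dist_real_def)
    have "emeasure \<mu> {lo 0 - r..lo 0 + r} \<le> emeasure \<mu> (ball (lo 0) e)"
      by (rule emeasure_mono[OF sub]) (simp add: S)
    moreover have "emeasure \<mu> {lo 0 - r..lo 0 + r} > 0" using mpos by (simp add: emeasure_eq_measure)
    ultimately show "emeasure \<mu> (ball (lo 0) e) > 0" by simp
  qed
qed

lemma Bfull:
  assumes AB: "assumptionB \<mu> n lo hi"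
  shows "\<forall>N. \<exists>\<delta>>0. \<forall>w. Im w > 0 \<longrightarrow> infdist w (complex_of_real ` msupp \<mu>) < \<delta> \<longrightarrow> N \<le> Ist \<mu> w"
proof
  fix N :: real
  obtain \<rho> C slo shi where n1: "n \<ge> 1" and lh: "\<forall>j<n. lo j < hi j" and rm: "\<rho> \<in> borel_measurable borel"
    and md: "\<mu> = density lborel (\<lambda>x. ennreal (\<rho> x))" and P: "prob_space \<mu>" and C: "C > 0"
    and sl: "\<forall>j<n. -1 < slo j \<and> slo j < 1 \<and> -1 < shi j \<and> shi j < 1"
    and ae: "\<forall>j<n. AE x in lborel. x \<in> {lo j..hi j} \<longrightarrow>
            inverse C < \<rho> x / ((x - lo j) powr slo j * (hi j - x) powr shi j)"
    by (rule B_data[OF AB])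
  have "\<forall>j\<in>{..<n}. \<exists>\<delta>>0. \<forall>x0\<in>{lo j..hi j}. \<forall>w. Im w > 0 \<longrightarrow> cmod (w - complex_of_real x0) < \<delta> \<longrightarrow> N \<le> Ist \<mu> w"
  proof
    fix j assume "j \<in> {..<n}"
    then have j: "j < n" by simp
    show "\<exists>\<delta>>0. \<forall>x0\<in>{lo j..hi j}. \<forall>w. Im w > 0 \<longrightarrow> cmod (w - complex_of_real x0) < \<delta> \<longrightarrow> N \<le> Ist \<mu> w"
      using Ilow_j[OF _ rm md P C _ _ ae[rule_format, OF j]] lh sl j by blast
  qed
  then have "\<exists>df. \<forall>j\<in>{..<n}. df j > 0 \<and> (\<forall>x0\<in>{lo j..hi j}. \<forall>w. Im w > 0 \<longrightarrow> cmod (w - complex_of_real x0) < df j \<longrightarrow> N \<le> Ist \<mu> w)"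
    by (rule bchoice)
  then obtain df where df: "\<And>j. j \<in> {..<n} \<Longrightarrow> df j > 0 \<and> (\<forall>x0\<in>{lo j..hi j}. \<forall>w. Im w > 0 \<longrightarrow> cmod (w - complex_of_real x0) < df j \<longrightarrow> N \<le> Ist \<mu> w)"
    by blast
  define \<delta> where "\<delta> = Min (df ` {..<n})"
  have fin: "finite (df ` {..<n})" by simp
  have "0 \<in> {..<n}" using n1 by simp
  then have nen: "df ` {..<n} \<noteq> {}" by blast
  have dpos: "\<delta> > 0" unfolding \<delta>_def using fin nen df by (simp add: Min_gr_iff)
  show "\<exists>\<delta>>0. \<forall>w. Im w > 0 \<longrightarrow> infdist w (complex_of_real ` msupp \<mu>) < \<delta> \<longrightarrow> N \<le> Ist \<mu> w"
  proof (intro exI[of _ \<delta>] conjI allI impI)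
    show "\<delta> > 0" by (rule dpos)
    fix w assume W: "Im w > 0" and lt: "infdist w (complex_of_real ` msupp \<mu>) < \<delta>"
    have ne: "complex_of_real ` msupp \<mu> \<noteq> {}" using msupp_ne[OF AB] by auto
    have "(INF x\<in>complex_of_real ` msupp \<mu>. dist w x) < \<delta>"
      using lt infdist_notempty[OF ne] by simp
    then obtain x where xin: "x \<in> complex_of_real ` msupp \<mu>" and dx: "dist w x < \<delta>"
    proof -
      have bb: "bdd_below ((\<lambda>x. dist w x) ` (complex_of_real ` msupp \<mu>))"
        by (rule bdd_belowI2[of _ 0]) simp
      show ?thesis using cINF_less_iff[OF ne bb, of \<delta>] that \<open>(INF x\<in>complex_of_real ` msupp \<mu>. dist w x) < \<delta>\<close> by blast
    qed
    obtain x0 where x0: "x0 \<in> msupp \<mu>" and xx: "x = complex_of_real x0" using xin by auto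
    obtain j where j: "j < n" and xj: "x0 \<in> {lo j..hi j}" using x0 msupp_sub[OF AB] by blast
    have "\<delta> \<le> df j" unfolding \<delta>_def using fin j by simp
    then have "cmod (w - complex_of_real x0) < df j" using dx xx by (simp add: dist_norm)
    then show "N \<le> Ist \<mu> w" using df[of j] j xj W by auto
  qed
qed

theorem lemma4p6:
  fixes \<mu>a \<mu>b \<nu> :: "real measure"
    and na nb :: nat and Alo Ahi Blo Bhi :: "nat \<Rightarrow> real"
    and \<omega>a \<omega>b :: "complex \<Rightarrow> complex"
    and a b :: real
  assumes "assumptionB \<mu>a na Alo Ahi"
    and "assumptionB \<mu>b nb Blo Bhi"
    and "subordination \<mu>a \<mu>b \<omega>a \<omega>b"
    and "prob_space \<nu>" and "sets \<nu> = sets borel"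
    and "\<forall>z. Im z > 0 \<longrightarrow> Ftrans \<nu> z = Ftrans \<mu>a (\<omega>b z)"
    and "a \<le> b"
    and "msupp \<nu> \<subseteq> {a..b}"
  shows "\<exists>Ca>0. \<exists>Cb>0. \<forall>z. Re z \<in> {a..b} \<and> 0 < Im z \<and> Im z \<le> 1 \<longrightarrow>
            infdist (\<omega>a z) (complex_of_real ` msupp \<mu>b) \<ge> Ca \<and>
            infdist (\<omega>b z) (complex_of_real ` msupp \<mu>a) \<ge> Cb"
proof -
  have ABa: "assumptionB \<mu>a na Alo Ahi" and ABb: "assumptionB \<mu>b nb Blo Bhi" using assms(1,2) .
  define Ra where "Ra = (\<Sum>j<na. \<bar>Alo j\<bar> + \<bar>Ahi j\<bar>)"
  define Rb where "Rb = (\<Sum>j<nb. \<bar>Blo j\<bar> + \<bar>Bhi j\<bar>)"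
  have Ra0: "Ra \<ge> 0" unfolding Ra_def by (simp add: sum_nonneg)
  have Rb0: "Rb \<ge> 0" unfolding Rb_def by (simp add: sum_nonneg)
  have Pa: "prob_space \<mu>a" by (rule B_basic(1)[OF ABa])
  have Sa: "sets \<mu>a = sets borel" by (rule B_basic(2)[OF ABa])
  have Pb: "prob_space \<mu>b" by (rule B_basic(1)[OF ABb])
  have Sb: "sets \<mu>b = sets borel" by (rule B_basic(2)[OF ABb])
  have bnda: "AE y in \<mu>a. \<bar>y\<bar> \<le> Ra" unfolding Ra_def by (rule B_basic(3)[OF ABa])
  have bndb: "AE y in \<mu>b. \<bar>y\<bar> \<le> Rb" unfolding Rb_def by (rule B_basic(3)[OF ABb])
  have suppa: "msupp \<mu>a \<subseteq> {-Ra..Ra}"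
  proof
    fix x assume "x \<in> msupp \<mu>a"
    then obtain j where j: "j < na" "x \<in> {Alo j..Ahi j}" using msupp_sub[OF ABa] by blast
    have "\<bar>x\<bar> \<le> \<bar>Alo j\<bar> + \<bar>Ahi j\<bar>" using j by auto
    also have "\<dots> \<le> Ra" unfolding Ra_def
      by (rule member_le_sum[where f="\<lambda>j. \<bar>Alo j\<bar> + \<bar>Ahi j\<bar>"]) (use j in auto)
    finally show "x \<in> {-Ra..Ra}" by auto
  qed
  have suppb: "msupp \<mu>b \<subseteq> {-Rb..Rb}"
  proof
    fix x assume "x \<in> msupp \<mu>b"
    then obtain j where j: "j < nb" "x \<in> {Blo j..Bhi j}" using msupp_sub[OF ABb] by blast
    have "\<bar>x\<bar> \<le> \<bar>Blo j\<bar> + \<bar>Bhi j\<bar>" using j by auto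
    also have "\<dots> \<le> Rb" unfolding Rb_def
      by (rule member_le_sum[where f="\<lambda>j. \<bar>Blo j\<bar> + \<bar>Bhi j\<bar>"]) (use j in auto)
    finally show "x \<in> {-Rb..Rb}" by auto
  qed
  have nea: "msupp \<mu>a \<noteq> {}" using msupp_ne[OF ABa] by auto
  have neb: "msupp \<mu>b \<noteq> {}" using msupp_ne[OF ABb] by auto
  have hAa: "\<forall>\<epsilon>>0. \<exists>C. \<forall>w. Im w > 0 \<longrightarrow> (cmod (stieltjes \<mu>a w))^2 \<le> \<epsilon> * Ist \<mu>a w + C"
    by (rule stbound[OF Pa Sa smallmass[OF Pa Sa B_basic(5)[OF ABa] bnda]])
  have hAb: "\<forall>\<epsilon>>0. \<exists>C. \<forall>w. Im w > 0 \<longrightarrow> (cmod (stieltjes \<mu>b w))^2 \<le> \<epsilon> * Ist \<mu>b w + C"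
    by (rule stbound[OF Pb Sb smallmass[OF Pb Sb B_basic(5)[OF ABb] bndb]])
  have hKb: "\<forall>u F. Im u > 0 \<longrightarrow> (\<integral>y. y^2 \<partial>\<mu>b) / (cmod u + Rb)^2 \<le> (\<integral>y. (cmod (1 + F / (complex_of_real y - u)))^2 \<partial>\<mu>b)"
    using Klow[OF Pb Sb Rb0 bndb B_basic(6)[OF ABb]] by blast
  have hKa: "\<forall>u F. Im u > 0 \<longrightarrow> (\<integral>y. y^2 \<partial>\<mu>a) / (cmod u + Ra)^2 \<le> (\<integral>y. (cmod (1 + F / (complex_of_real y - u)))^2 \<partial>\<mu>a)"
    using Klow[OF Pa Sa Ra0 bnda B_basic(6)[OF ABa]] by blast
  have sub: "\<forall>z. Im z > 0 \<longrightarrow> Im (\<omega>a z) \<ge> Im z \<and> Im (\<omega>b z) \<ge> Im z \<and>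
                 \<omega>a z + \<omega>b z - z = Ftrans \<mu>a (\<omega>b z) \<and> \<omega>a z + \<omega>b z - z = Ftrans \<mu>b (\<omega>a z)"
    using assms(3) unfolding subordination_def by blast
  have sub': "\<forall>z. Im z > 0 \<longrightarrow> Im (\<omega>b z) \<ge> Im z \<and> Im (\<omega>a z) \<ge> Im z \<and>
                 \<omega>b z + \<omega>a z - z = Ftrans \<mu>b (\<omega>a z) \<and> \<omega>b z + \<omega>a z - z = Ftrans \<mu>a (\<omega>b z)"
  proof (intro allI impI)
    fix z :: complex assume zp: "Im z > 0"
    have h: "Im (\<omega>a z) \<ge> Im z \<and> Im (\<omega>b z) \<ge> Im z \<and>
                 \<omega>a z + \<omega>b z - z = Ftrans \<mu>a (\<omega>b z) \<and> \<omega>a z + \<omega>b z - z = Ftrans \<mu>b (\<omega>a z)"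
      using sub zp by blast
    have e: "\<omega>b z + \<omega>a z = \<omega>a z + \<omega>b z" by (rule add.commute)
    show "Im (\<omega>b z) \<ge> Im z \<and> Im (\<omega>a z) \<ge> Im z \<and>
                 \<omega>b z + \<omega>a z - z = Ftrans \<mu>b (\<omega>a z) \<and> \<omega>b z + \<omega>a z - z = Ftrans \<mu>a (\<omega>b z)"
      unfolding e using h by blast
  qed
  obtain Cb where Cb: "Cb > 0" and hCb: "\<forall>z. Re z \<in> {a..b} \<and> 0 < Im z \<and> Im z \<le> 1 \<longrightarrow>
            Cb \<le> infdist (\<omega>b z) (complex_of_real ` msupp \<mu>a)"
    using core[OF Pa Sa Pb Sb suppa nea hAa Bfull[OF ABa] sigpos[OF ABb] Rb0 hKb sub] by blast
  obtain Ca where Ca: "Ca > 0" and hCa: "\<forall>z. Re z \<in> {a..b} \<and> 0 < Im z \<and> Im z \<le> 1 \<longrightarrow>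
            Ca \<le> infdist (\<omega>a z) (complex_of_real ` msupp \<mu>b)"
    using core[OF Pb Sb Pa Sa suppb neb hAb Bfull[OF ABb] sigpos[OF ABa] Ra0 hKa sub'] by blast
  show ?thesis using Ca Cb hCa hCb by blast
qed

end
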